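(* Let $G=(V,E,\sigma)$ be a graph as in the context, $\Gamma$ a nonempty family of walks, and $1<p<\infty$. For $q>1$ let $\rho_q$ denote the unique extremal density for $\mathrm{Mod}_q(\Gamma)$. Then $\lim_{q\to p}\|\rho_p-\rho_q\|=0$ for any norm $\|\cdot\|$ on $\mathbb{R}^E$.
   Context: Let $G=(V,E,\sigma)$ be a finite simple graph (directed or undirected) with edge weights $\sigma:E\to(0,\infty)$. A walk is a string of edges $e_1\dots e_r$, $r\ge1$, $e_i=(v_i,v_{i+1})\in E$, with $\rho$-length $\ell_\rho(\gamma)=\sum_i\rho(e_i)$. $A(\Gamma)=\{\rho:E\to\mathbb{R}:\rho\ge0,\ \ell_\rho(\gamma)\ge1\ \forall\gamma\in\Gamma\}$, $\mathcal{E}_q(\rho)=\sum_e\sigma(e)|\rho(e)|^q$, $\mathrm{Mod}_q(\Gamma)=\inf_{\rho\in A(\Gamma)}\mathcal{E}_q(\rho)$; an extremal density is a minimizer in $A(\Gamma)$, unique when $1<q<\infty$. *)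

theory Defs
  imports "HOL-Analysis.Analysis"
begin

text \<open>Edges are of an arbitrary type 'e; trav e u v means that edge e may be traversed
from u to v.\<close>

definition dtrav :: "('v \<times> 'v) \<Rightarrow> 'v \<Rightarrow> 'v \<Rightarrow> bool" where
  "dtrav e u v \<longleftrightarrow> e = (u, v)"

definition utrav :: "'v set \<Rightarrow> 'v \<Rightarrow> 'v \<Rightarrow> bool" where
  "utrav e u v \<longleftrightarrow> e = {u, v}"

definition simple_digraph :: "'v set \<Rightarrow> ('v \<times> 'v) set \<Rightarrow> bool" where
  "simple_digraph V E \<longleftrightarrow> finite V \<and> E \<subseteq> V \<times> V \<and> (\<forall>v. (v, v) \<notin> E)"

definition simple_ugraph :: "'v set \<Rightarrow> 'v set set \<Rightarrow> bool" where
  "simple_ugraph V E \<longleftrightarrow> finite V \<and>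
     (\<forall>e\<in>E. \<exists>u v. u \<in> V \<and> v \<in> V \<and> u \<noteq> v \<and> e = {u, v})"

definition is_walk :: "('e \<Rightarrow> 'v \<Rightarrow> 'v \<Rightarrow> bool) \<Rightarrow> 'e set \<Rightarrow> 'e list \<Rightarrow> bool" where
  "is_walk trav E es \<longleftrightarrow> es \<noteq> [] \<and> set es \<subseteq> E \<and>
     (\<exists>vs :: 'v list. length vs = Suc (length es) \<and>
        (\<forall>i < length es. trav (es ! i) (vs ! i) (vs ! Suc i)))"

definition rho_length :: "('e \<Rightarrow> real) \<Rightarrow> 'e list \<Rightarrow> real" where
  "rho_length \<rho> \<gamma> = sum_list (map \<rho> \<gamma>)"

text \<open>Densities rho : E \<rightarrow> R are represented as functions vanishing outside E.\<close>
definition admissible :: "'e set \<Rightarrow> 'e list set \<Rightarrow> ('e \<Rightarrow> real) set" where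
  "admissible E \<Gamma> = {\<rho>. (\<forall>e. e \<notin> E \<longrightarrow> \<rho> e = 0) \<and> (\<forall>e\<in>E. \<rho> e \<ge> 0) \<and>
                        (\<forall>\<gamma>\<in>\<Gamma>. rho_length \<rho> \<gamma> \<ge> 1)}"

definition energy :: "'e set \<Rightarrow> ('e \<Rightarrow> real) \<Rightarrow> real \<Rightarrow> ('e \<Rightarrow> real) \<Rightarrow> real" where
  "energy E \<sigma> q \<rho> = (\<Sum>e\<in>E. \<sigma> e * \<bar>\<rho> e\<bar> powr q)"

definition Modq :: "'e set \<Rightarrow> ('e \<Rightarrow> real) \<Rightarrow> real \<Rightarrow> 'e list set \<Rightarrow> real" where
  "Modq E \<sigma> q \<Gamma> = Inf (energy E \<sigma> q ` admissible E \<Gamma>)"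

definition extremal_density :: "'e set \<Rightarrow> ('e \<Rightarrow> real) \<Rightarrow> real \<Rightarrow> 'e list set \<Rightarrow> ('e \<Rightarrow> real) \<Rightarrow> bool" where
  "extremal_density E \<sigma> q \<Gamma> \<rho> \<longleftrightarrow> \<rho> \<in> admissible E \<Gamma> \<and> energy E \<sigma> q \<rho> = Modq E \<sigma> q \<Gamma>"

text \<open>The (unique, for 1 < q < infinity) extremal density rho_q.\<close>
definition the_extremal :: "'e set \<Rightarrow> ('e \<Rightarrow> real) \<Rightarrow> real \<Rightarrow> 'e list set \<Rightarrow> ('e \<Rightarrow> real)" where
  "the_extremal E \<sigma> q \<Gamma> = (THE \<rho>. extremal_density E \<sigma> q \<Gamma> \<rho>)"

definition norm_on :: "'e set \<Rightarrow> (('e \<Rightarrow> real) \<Rightarrow> real) \<Rightarrow> bool" where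
  "norm_on E N \<longleftrightarrow>
     (\<forall>f g c. (\<forall>e. e \<notin> E \<longrightarrow> f e = 0) \<longrightarrow> (\<forall>e. e \<notin> E \<longrightarrow> g e = 0) \<longrightarrow>
        N f \<ge> 0 \<and> (N f = 0 \<longleftrightarrow> f = (\<lambda>_. 0)) \<and>
        N (\<lambda>e. c * f e) = \<bar>c\<bar> * N f \<and> N (\<lambda>e. f e + g e) \<le> N f + N g)"


end

theory Submission
  imports Defs
begin

lemma strict_mid_powr:
  fixes a b q :: real
  assumes "0 \<le> a" "a < b" "1 < q"
  shows "((a+b)/2) powr q < (a powr q + b powr q)/2"
proof -
  define m where "m = (a+b)/2"
  have am: "a < m" "m < b" using assms by (auto simp: m_def)
  have cont: "continuous_on {x..y} (\<lambda>z. z powr q)" if "0 \<le> x" for x y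
    using that assms by (intro continuous_on_powr' continuous_intros) auto
  have dif: "(\<lambda>z. z powr q) differentiable (at z)" if "0 < z" for z
    using has_real_derivative_powr[OF that, of q] real_differentiable_def by blast
  have der: "l = q * z powr (q - 1)" if "0 < z" "((\<lambda>z. z powr q) has_real_derivative l) (at z)" for z l
    using DERIV_unique[OF that(2) has_real_derivative_powr[OF that(1)]] .
  obtain l1 z1 where z1: "a < z1" "z1 < m" "((\<lambda>z. z powr q) has_real_derivative l1) (at z1)"
    "m powr q - a powr q = (m - a) * l1"
  proof -
    have d1: "\<And>x. a < x \<Longrightarrow> x < m \<Longrightarrow> (\<lambda>z. z powr q) differentiable (at x)"
      using dif assms(1) by simp
    show ?thesis using MVT[OF am(1) cont[OF assms(1)] d1] that by blast
  qed
  obtain l2 z2 where z2: "m < z2" "z2 < b" "((\<lambda>z. z powr q) has_real_derivative l2) (at z2)"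
    "b powr q - m powr q = (b - m) * l2"
  proof -
    have m0: "0 \<le> m" using am assms(1) by simp
    have d1: "\<And>x. m < x \<Longrightarrow> x < b \<Longrightarrow> (\<lambda>z. z powr q) differentiable (at x)"
      using dif m0 by simp
    show ?thesis using MVT[OF am(2) cont[OF m0] d1] that by blast
  qed
  have z1p: "0 < z1" using z1 assms by linarith
  have l1: "l1 = q * z1 powr (q - 1)" using der[OF z1p z1(3)] .
  have l2: "l2 = q * z2 powr (q - 1)" using der[OF _ z2(3)] z1p z1 z2 by simp
  have "z1 powr (q - 1) < z2 powr (q - 1)"
    using z1 z2 z1p assms by (intro powr_less_mono2) auto
  hence ll: "l1 < l2" using l1 l2 assms by simp
  have eqd: "m - a = b - m" "m - a > 0" using am by (auto simp: m_def field_simps)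
  have "(m - a) * l1 < (m - a) * l2" using ll eqd(2) by (rule mult_strict_left_mono)
  hence "m powr q - a powr q < b powr q - m powr q"
    using z1(4) z2(4) eqd(1) by simp
  hence "2 * m powr q < a powr q + b powr q" by linarith
  thus ?thesis unfolding m_def[symmetric] using add_divide_distrib[of "a powr q" "b powr q" 2] by linarith
qed

lemma mid_powr:
  fixes a b q :: real
  assumes "0 \<le> a" "0 \<le> b" "1 < q"
  shows "((a+b)/2) powr q \<le> (a powr q + b powr q)/2"
proof (cases "a = b")
  case False
  then consider "a < b" | "b < a" by linarith
  then show ?thesis
    using strict_mid_powr[of a b q] strict_mid_powr[of b a q] assms by (cases; simp add: add.commute)
qed simp

lemma unif_powr:
  fixes p M \<epsilon> :: real
  assumes "1 < p" "0 \<le> M" "\<epsilon> > 0"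
  shows "\<exists>\<delta>>0. \<forall>q x. \<bar>q - p\<bar> < \<delta> \<longrightarrow> 1 \<le> q \<longrightarrow> q \<le> p+1 \<longrightarrow> 0 \<le> x \<longrightarrow> x \<le> M
            \<longrightarrow> \<bar>x powr q - x powr p\<bar> < \<epsilon>"
proof -
  define T where "T = {0..M} \<times> {1..p+1}"
  have "continuous_on T (\<lambda>z. fst z powr snd z)"
    unfolding T_def by (intro continuous_on_powr' continuous_intros) auto
  moreover have "compact T" unfolding T_def by (intro compact_Times compact_Icc)
  ultimately have "uniformly_continuous_on T (\<lambda>z. fst z powr snd z)"
    by (rule compact_uniformly_continuous)
  then obtain d where d: "d > 0" and
    dd: "\<And>z z'. z \<in> T \<Longrightarrow> z' \<in> T \<Longrightarrow> dist z' z < d \<Longrightarrow> dist (fst z' powr snd z') (fst z powr snd z) < \<epsilon>"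
    unfolding uniformly_continuous_on_def using assms(3) by metis
  show ?thesis
  proof (intro exI[of _ d] conjI allI impI)
    fix q x :: real
    assume h: "\<bar>q - p\<bar> < d" "1 \<le> q" "q \<le> p+1" "0 \<le> x" "x \<le> M"
    have "(x,q) \<in> T" "(x,p) \<in> T" using h assms unfolding T_def by auto
    moreover have "dist (x,q) (x,p) < d" using h by (simp add: dist_Pair_Pair dist_real_def)
    ultimately have "dist (x powr q) (x powr p) < \<epsilon>" using dd by fastforce
    thus "\<bar>x powr q - x powr p\<bar> < \<epsilon>" by (simp add: dist_real_def)
  qed (use d in auto)
qed

lemma gap_powr:
  fixes p M \<eta> :: real
  assumes "1 < p" "\<eta> > 0"
  shows "\<exists>g0>0. \<forall>a b. 0 \<le> a \<longrightarrow> a \<le> M \<longrightarrow> 0 \<le> b \<longrightarrow> b \<le> M \<longrightarrow> \<eta> \<le> \<bar>a - b\<bar>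
            \<longrightarrow> g0 \<le> (a powr p + b powr p)/2 - ((a+b)/2) powr p"
proof -
  define T where "T = ({0..M} \<times> {0..M}) \<inter> {z::real\<times>real. \<eta> \<le> \<bar>fst z - snd z\<bar>}"
  define g where "g = (\<lambda>z::real\<times>real. (fst z powr p + snd z powr p)/2 - ((fst z + snd z)/2) powr p)"
  have "closed {z::real\<times>real. \<eta> \<le> \<bar>fst z - snd z\<bar>}"
    by (intro closed_Collect_le continuous_intros)
  hence cT: "compact T" unfolding T_def by (intro compact_Int_closed compact_Times compact_Icc)
  show ?thesis
  proof (cases "T = {}")
    case True
    show ?thesis
    proof (intro exI[of _ 1] conjI allI impI)
      fix a b :: real assume "0 \<le> a" "a \<le> M" "0 \<le> b" "b \<le> M" "\<eta> \<le> \<bar>a - b\<bar>"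
      hence "(a,b) \<in> T" unfolding T_def by auto
      with True show "1 \<le> (a powr p + b powr p)/2 - ((a+b)/2) powr p" by simp
    qed simp
  next
    case False
    have "continuous_on T g" unfolding g_def T_def
      using assms by (intro continuous_on_powr' continuous_intros) auto
    then obtain z0 where z0: "z0 \<in> T" "\<And>y. y \<in> T \<Longrightarrow> g z0 \<le> g y"
      using continuous_attains_inf[OF cT False] by blast
    have pos: "g z0 > 0"
    proof -
      obtain a b where ab: "z0 = (a,b)" by (cases z0)
      have h: "0 \<le> a" "0 \<le> b" "\<eta> \<le> \<bar>a - b\<bar>" using z0(1) ab unfolding T_def by auto
      hence "a < b \<or> b < a" using assms by linarith
      thus ?thesis
        using strict_mid_powr[of a b p] strict_mid_powr[of b a p] h assms unfolding ab g_def
        by (auto simp: add.commute)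
    qed
    show ?thesis
    proof (intro exI[of _ "g z0"] conjI allI impI)
      fix a b :: real assume "0 \<le> a" "a \<le> M" "0 \<le> b" "b \<le> M" "\<eta> \<le> \<bar>a - b\<bar>"
      hence "(a,b) \<in> T" unfolding T_def by auto
      from z0(2)[OF this] show "g z0 \<le> (a powr p + b powr p)/2 - ((a+b)/2) powr p"
        by (simp add: g_def)
    qed (rule pos)
  qed
qed

lemma norm_onD:
  assumes "norm_on E N" "\<forall>e. e \<notin> E \<longrightarrow> f e = 0" "\<forall>e. e \<notin> E \<longrightarrow> g e = 0"
  shows "N f \<ge> 0" "N f = 0 \<longleftrightarrow> f = (\<lambda>_. 0)" "N (\<lambda>e. c * f e) = \<bar>c\<bar> * N f"
    "N (\<lambda>e. f e + g e) \<le> N f + N g"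
  using assms(1)[unfolded norm_on_def, rule_format, of f g c] assms(2,3) by auto

lemma norm_bound_gen:
  assumes N: "norm_on E N" and F: "finite F" "F \<subseteq> E"
  shows "N (\<lambda>x. if x \<in> F then f x else 0) \<le> (\<Sum>e\<in>F. \<bar>f e\<bar> * N (\<lambda>x. if x = e then 1 else 0))"
  using F
proof (induction F rule: finite_induct)
  case empty
  have "N (\<lambda>_. 0) = 0" using norm_onD(2)[OF N, of "\<lambda>_. 0" "\<lambda>_. 0"] by simp
  thus ?case by simp
next
  case (insert a F)
  define g where "g = (\<lambda>x. if x \<in> F then f x else 0)"
  define d where "d = (\<lambda>x. if x = a then 1 else (0::real))"
  have gv: "\<forall>e. e \<notin> E \<longrightarrow> g e = 0" using insert.prems unfolding g_def by auto
  have dv: "\<forall>e. e \<notin> E \<longrightarrow> d e = 0" using insert.prems unfolding d_def by auto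
  have dv2: "\<forall>e. e \<notin> E \<longrightarrow> f a * d e = 0" using dv by simp
  have eq: "(\<lambda>x. if x \<in> insert a F then f x else 0) = (\<lambda>x. g x + f a * d x)"
    using insert.hyps unfolding g_def d_def by auto
  have "N (\<lambda>x. g x + f a * d x) \<le> N g + N (\<lambda>x. f a * d x)"
    using norm_onD(4)[OF N gv dv2] .
  also have "N (\<lambda>x. f a * d x) = \<bar>f a\<bar> * N d"
    using norm_onD(3)[OF N dv dv] .
  also have "N g \<le> (\<Sum>e\<in>F. \<bar>f e\<bar> * N (\<lambda>x. if x = e then 1 else 0))"
    using insert.IH insert.prems unfolding g_def by auto
  finally have "N (\<lambda>x. g x + f a * d x) \<le> (\<Sum>e\<in>F. \<bar>f e\<bar> * N (\<lambda>x. if x = e then 1 else 0)) + \<bar>f a\<bar> * N d"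
    by simp
  thus ?case using insert.hyps unfolding eq d_def by simp
qed

lemma norm_bound:
  assumes N: "norm_on E N" and fin: "finite E" and f: "\<forall>e. e \<notin> E \<longrightarrow> f e = 0"
  shows "N f \<le> (\<Sum>e\<in>E. \<bar>f e\<bar> * N (\<lambda>x. if x = e then 1 else 0))"
proof -
  have "(\<lambda>x. if x \<in> E then f x else 0) = f" using f by auto
  thus ?thesis using norm_bound_gen[OF N fin order_refl, of f] by simp
qed

lemma rho_length_Nil[simp]: "rho_length \<rho> [] = 0"
  by (simp add: rho_length_def)
lemma rho_length_Cons[simp]: "rho_length \<rho> (x # xs) = \<rho> x + rho_length \<rho> xs"
  by (simp add: rho_length_def)

lemma rho_length_mid: "rho_length (\<lambda>e. (f e + g e)/2) \<gamma> = (rho_length f \<gamma> + rho_length g \<gamma>)/2"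
  by (induction \<gamma>) (auto simp: field_simps)

lemma rho_length_cont: "continuous_on UNIV (\<lambda>\<rho>::'e\<Rightarrow>real. rho_length \<rho> \<gamma>)"
  by (induction \<gamma>) (auto intro!: continuous_intros)

locale mg =
  fixes E :: "'e set" and \<sigma> :: "'e \<Rightarrow> real" and \<Gamma> :: "'e list set"
  assumes fin: "finite E" and sig: "\<forall>e\<in>E. \<sigma> e > 0"
    and walks: "\<forall>\<gamma>\<in>\<Gamma>. \<gamma> \<noteq> [] \<and> set \<gamma> \<subseteq> E"
begin

definition "S = (\<Sum>e\<in>E. \<sigma> e)"
definition "M = 1 + (\<Sum>e\<in>E. S / \<sigma> e)"
definition "ind = (\<lambda>e. if e \<in> E then 1 else (0::real))"

lemma sig_nn: "e \<in> E \<Longrightarrow> 0 \<le> \<sigma> e" using sig by (simp add: less_imp_le)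

lemma S_nonneg: "0 \<le> S" unfolding S_def using sig_nn by (intro sum_nonneg) auto

lemma M_ge1: "1 \<le> M" unfolding M_def using sig S_nonneg by (auto intro!: sum_nonneg)

lemma ind_adm: "ind \<in> admissible E \<Gamma>"
proof -
  have "rho_length ind \<gamma> = real (length \<gamma>)" if "set \<gamma> \<subseteq> E" for \<gamma>
    using that by (induction \<gamma>) (auto simp: ind_def)
  moreover have "\<gamma> \<in> \<Gamma> \<Longrightarrow> 1 \<le> length \<gamma>" for \<gamma> using walks by (cases \<gamma>) auto
  ultimately show ?thesis using walks unfolding admissible_def ind_def by auto
qed

lemma energy_ind: "0 < q \<Longrightarrow> energy E \<sigma> q ind = S"
  unfolding energy_def S_def ind_def by simp

lemma energy_nonneg: "0 \<le> energy E \<sigma> q \<rho>"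
  unfolding energy_def using sig_nn by (intro sum_nonneg mult_nonneg_nonneg) auto

lemma adm_nonneg: "\<rho> \<in> admissible E \<Gamma> \<Longrightarrow> 0 \<le> \<rho> e"
  unfolding admissible_def by (cases "e \<in> E") auto

lemma adm_out: "\<rho> \<in> admissible E \<Gamma> \<Longrightarrow> e \<notin> E \<Longrightarrow> \<rho> e = 0"
  unfolding admissible_def by auto

lemma energy_adm: "\<rho> \<in> admissible E \<Gamma> \<Longrightarrow> energy E \<sigma> q \<rho> = (\<Sum>e\<in>E. \<sigma> e * \<rho> e powr q)"
  unfolding energy_def using adm_nonneg by simp

lemma term_le_energy: "e \<in> E \<Longrightarrow> \<sigma> e * \<bar>\<rho> e\<bar> powr q \<le> energy E \<sigma> q \<rho>"
  unfolding energy_def using sig_nn fin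
  by (intro member_le_sum mult_nonneg_nonneg) auto

lemma box:
  assumes q: "1 \<le> q" and a: "\<rho> \<in> admissible E \<Gamma>" and en: "energy E \<sigma> q \<rho> \<le> S"
  shows "\<rho> e \<le> M"
proof (cases "e \<in> E")
  case False thus ?thesis using adm_out[OF a] M_ge1 by simp
next
  case True
  have s: "\<sigma> e > 0" using sig True by auto
  have "\<sigma> e * \<rho> e powr q \<le> S" using term_le_energy[OF True, of \<rho> q] en adm_nonneg[OF a, of e] by simp
  hence "\<rho> e powr q \<le> S / \<sigma> e" using s by (simp add: field_simps)
  also have "S / \<sigma> e \<le> (\<Sum>e\<in>E. S / \<sigma> e)"
    using fin True sig S_nonneg by (intro member_le_sum) auto
  finally have le: "\<rho> e powr q < M" unfolding M_def by simp
  show ?thesis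
  proof (rule ccontr)
    assume "\<not> \<rho> e \<le> M"
    hence g: "M < \<rho> e" "1 < \<rho> e" using M_ge1 by auto
    have "\<rho> e powr 1 \<le> \<rho> e powr q" using g q by (intro powr_mono) auto
    thus False using g le by simp
  qed
qed

lemma extremal_le:
  assumes "extremal_density E \<sigma> q \<Gamma> \<rho>" "\<rho>' \<in> admissible E \<Gamma>"
  shows "energy E \<sigma> q \<rho> \<le> energy E \<sigma> q \<rho>'"
proof -
  have "bdd_below (energy E \<sigma> q ` admissible E \<Gamma>)"
    using energy_nonneg by (intro bdd_belowI[of _ 0]) auto
  hence "Modq E \<sigma> q \<Gamma> \<le> energy E \<sigma> q \<rho>'"
    unfolding Modq_def using assms(2) by (intro cInf_lower) auto
  thus ?thesis using assms(1) unfolding extremal_density_def by simp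
qed

lemma adm_closed: "closed (admissible E \<Gamma>)"
proof -
  have eq: "admissible E \<Gamma> = (\<Inter>e\<in>-E. {\<rho>. \<rho> e = 0}) \<inter> (\<Inter>e\<in>E. {\<rho>. 0 \<le> \<rho> e})
        \<inter> (\<Inter>\<gamma>\<in>\<Gamma>. {\<rho>. 1 \<le> rho_length \<rho> \<gamma>})"
    unfolding admissible_def by auto
  show ?thesis unfolding eq
    by (intro closed_Int closed_INT ballI closed_Collect_eq closed_Collect_le
          continuous_on_const continuous_on_product_coordinates rho_length_cont)
qed

lemma energy_cont: "0 < q \<Longrightarrow> continuous_on UNIV (energy E \<sigma> q)"
  unfolding energy_def
  by (intro continuous_on_sum continuous_on_mult continuous_on_const continuous_on_powr'
        continuous_on_rabs continuous_on_product_coordinates) auto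

lemma mid_adm:
  assumes "\<rho>1 \<in> admissible E \<Gamma>" "\<rho>2 \<in> admissible E \<Gamma>"
  shows "(\<lambda>e. (\<rho>1 e + \<rho>2 e)/2) \<in> admissible E \<Gamma>"
  using assms unfolding admissible_def by (auto simp: rho_length_mid) (smt (verit))

lemma existence:
  assumes q: "1 < q"
  shows "\<exists>\<rho>. extremal_density E \<sigma> q \<Gamma> \<rho>"
proof -
  define K where "K = (\<lambda>e. if e \<in> E then {0..M} else {0::real})"
  define B where "B = Pi UNIV K"
  have "compactin (product_topology (\<lambda>i. euclidean) UNIV) (PiE UNIV K)"
    by (subst compactin_PiE) (auto simp: K_def)
  hence cB: "compact B" unfolding B_def euclidean_product_topology PiE_UNIV_domain by simp
  have cC: "compact (B \<inter> admissible E \<Gamma>)" using cB adm_closed by (rule compact_Int_closed)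
  have indC: "ind \<in> B \<inter> admissible E \<Gamma>"
    using ind_adm M_ge1 unfolding B_def K_def ind_def by auto
  obtain \<rho>0 where r0: "\<rho>0 \<in> B \<inter> admissible E \<Gamma>"
    "\<And>y. y \<in> B \<inter> admissible E \<Gamma> \<Longrightarrow> energy E \<sigma> q \<rho>0 \<le> energy E \<sigma> q y"
  proof -
    have ne: "B \<inter> admissible E \<Gamma> \<noteq> {}" using indC by blast
    have ct: "continuous_on (B \<inter> admissible E \<Gamma>) (energy E \<sigma> q)"
      using energy_cont[of q] q by (rule_tac continuous_on_subset) auto
    show ?thesis using continuous_attains_inf[OF cC ne ct] that by blast
  qed
  have min: "energy E \<sigma> q \<rho>0 \<le> energy E \<sigma> q \<rho>" if r: "\<rho> \<in> admissible E \<Gamma>" for \<rho>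
  proof (cases "energy E \<sigma> q \<rho> \<le> S")
    case True
    have "\<rho> \<in> B" unfolding B_def K_def
      using box[OF _ r True] q adm_nonneg[OF r] adm_out[OF r] by auto
    thus ?thesis using r0(2) r by auto
  next
    case False
    have "energy E \<sigma> q \<rho>0 \<le> energy E \<sigma> q ind" using r0(2) indC by auto
    thus ?thesis using False energy_ind q by simp
  qed
  have "Modq E \<sigma> q \<Gamma> = energy E \<sigma> q \<rho>0"
    unfolding Modq_def using r0(1) min by (intro cInf_eq_minimum) auto
  thus ?thesis using r0(1) unfolding extremal_density_def by auto
qed

lemma uniqueness:
  assumes q: "1 < q" and r1: "extremal_density E \<sigma> q \<Gamma> \<rho>1" and r2: "extremal_density E \<sigma> q \<Gamma> \<rho>2"
  shows "\<rho>1 = \<rho>2"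
proof (rule ccontr)
  assume ne: "\<rho>1 \<noteq> \<rho>2"
  have a1: "\<rho>1 \<in> admissible E \<Gamma>" and a2: "\<rho>2 \<in> admissible E \<Gamma>"
    using r1 r2 unfolding extremal_density_def by auto
  obtain e where e: "\<rho>1 e \<noteq> \<rho>2 e" using ne by auto
  have eE: "e \<in> E" using e adm_out[OF a1, of e] adm_out[OF a2, of e] by (cases "e \<in> E") simp_all
  define \<mu> where "\<mu> = (\<lambda>e. (\<rho>1 e + \<rho>2 e)/2)"
  have am: "\<mu> \<in> admissible E \<Gamma>" unfolding \<mu>_def using mid_adm[OF a1 a2] .
  have "energy E \<sigma> q \<mu> < (\<Sum>x\<in>E. \<sigma> x * ((\<rho>1 x powr q + \<rho>2 x powr q)/2))"
    unfolding energy_adm[OF am]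
  proof (rule sum_strict_mono_ex1[OF fin])
    show "\<forall>x\<in>E. \<sigma> x * \<mu> x powr q \<le> \<sigma> x * ((\<rho>1 x powr q + \<rho>2 x powr q) / 2)"
      using sig mid_powr[OF adm_nonneg[OF a1] adm_nonneg[OF a2] q] unfolding \<mu>_def
      by (auto intro!: mult_left_mono less_imp_le)
    have "\<mu> e powr q < (\<rho>1 e powr q + \<rho>2 e powr q) / 2"
    proof (cases "\<rho>1 e < \<rho>2 e")
      case True thus ?thesis using strict_mid_powr[OF adm_nonneg[OF a1] True q] unfolding \<mu>_def by simp
    next
      case False
      hence "\<rho>2 e < \<rho>1 e" using e by auto
      thus ?thesis using strict_mid_powr[OF adm_nonneg[OF a2] _ q] unfolding \<mu>_def by (simp add: add.commute)
    qed
    thus "\<exists>x\<in>E. \<sigma> x * \<mu> x powr q < \<sigma> x * ((\<rho>1 x powr q + \<rho>2 x powr q) / 2)"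
      using eE sig by auto
  qed
  also have "\<dots> = (energy E \<sigma> q \<rho>1 + energy E \<sigma> q \<rho>2)/2"
    unfolding energy_adm[OF a1] energy_adm[OF a2]
    by (simp add: ring_distribs add_divide_distrib sum.distrib sum_divide_distrib[symmetric])
  also have "\<dots> = Modq E \<sigma> q \<Gamma>" using r1 r2 unfolding extremal_density_def by simp
  also have "\<dots> \<le> energy E \<sigma> q \<mu>" using extremal_le[OF r1 am] r1 unfolding extremal_density_def by simp
  finally show False by simp
qed

lemma the_ext: "1 < q \<Longrightarrow> extremal_density E \<sigma> q \<Gamma> (the_extremal E \<sigma> q \<Gamma>)"
  unfolding the_extremal_def using existence uniqueness by (metis theI)

lemma conv_e:
  assumes p: "1 < p" and eE: "e \<in> E" and \<eta>: "0 < \<eta>"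
  shows "eventually (\<lambda>q. \<bar>the_extremal E \<sigma> q \<Gamma> e - the_extremal E \<sigma> p \<Gamma> e\<bar> < \<eta>) (at p)"
proof -
  define b where "b = the_extremal E \<sigma> p \<Gamma>"
  have M0: "0 \<le> M" using M_ge1 by simp
  obtain g0 where g0: "g0 > 0" and gap: "\<And>x y. 0 \<le> x \<Longrightarrow> x \<le> M \<Longrightarrow> 0 \<le> y \<Longrightarrow> y \<le> M \<Longrightarrow> \<eta> \<le> \<bar>x - y\<bar>
            \<Longrightarrow> g0 \<le> (x powr p + y powr p)/2 - ((x+y)/2) powr p"
    using gap_powr[OF p \<eta>, of M] by blast
  have se: "0 < \<sigma> e" using sig eE by auto
  have "\<sigma> e \<le> S" unfolding S_def using fin eE sig_nn by (intro member_le_sum) auto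
  hence Spos: "0 < S" using se by simp
  define \<epsilon> where "\<epsilon> = \<sigma> e * g0 / (2*S)"
  have \<epsilon>: "0 < \<epsilon>" unfolding \<epsilon>_def using se g0 Spos by simp
  have \<epsilon>S: "2 * S * \<epsilon> = \<sigma> e * g0" unfolding \<epsilon>_def using Spos by simp
  obtain \<delta> where \<delta>: "\<delta> > 0" and unif: "\<And>q x. \<bar>q - p\<bar> < \<delta> \<Longrightarrow> 1 \<le> q \<Longrightarrow> q \<le> p+1 \<Longrightarrow> 0 \<le> x \<Longrightarrow> x \<le> M
            \<Longrightarrow> \<bar>x powr q - x powr p\<bar> < \<epsilon>"
    using unif_powr[OF p M0 \<epsilon>] by blast
  have ev: "eventually (\<lambda>q. 1 < q \<and> q \<le> p+1 \<and> \<bar>q - p\<bar> < \<delta>) (at p)"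
    unfolding eventually_at
    by (rule exI[of _ "min \<delta> (min (p - 1) 1)"]) (use \<delta> p in \<open>auto simp: dist_real_def\<close>)
  show ?thesis unfolding b_def[symmetric]
  proof (rule eventually_mono[OF ev])
    fix q assume qh: "1 < q \<and> q \<le> p+1 \<and> \<bar>q - p\<bar> < \<delta>"
    define a where "a = the_extremal E \<sigma> q \<Gamma>"
    have xa: "extremal_density E \<sigma> q \<Gamma> a" unfolding a_def using the_ext qh by simp
    have xb: "extremal_density E \<sigma> p \<Gamma> b" unfolding b_def using the_ext p by simp
    have aA: "a \<in> admissible E \<Gamma>" and bA: "b \<in> admissible E \<Gamma>"
      using xa xb unfolding extremal_density_def by auto
    have "energy E \<sigma> q a \<le> S" using extremal_le[OF xa ind_adm] energy_ind qh by simp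
    hence aM: "\<And>x. a x \<le> M" using box[OF _ aA] qh by (meson less_imp_le)
    have "energy E \<sigma> p b \<le> S" using extremal_le[OF xb ind_adm] energy_ind p by simp
    hence bM: "\<And>x. b x \<le> M" using box[OF _ bA] p by (meson less_imp_le)
    have close: "\<bar>x powr q - x powr p\<bar> < \<epsilon>" if "0 \<le> x" "x \<le> M" for x
      using unif[OF _ _ _ that] qh by auto
    have h1: "energy E \<sigma> p a \<le> energy E \<sigma> q a + S * \<epsilon>"
    proof -
      have "energy E \<sigma> p a \<le> (\<Sum>x\<in>E. \<sigma> x * (a x powr q + \<epsilon>))"
        unfolding energy_adm[OF aA]
      proof (rule sum_mono)
        fix x assume "x \<in> E"
        have "a x powr p \<le> a x powr q + \<epsilon>" using close[OF adm_nonneg[OF aA] aM, of x] by linarith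
        thus "\<sigma> x * a x powr p \<le> \<sigma> x * (a x powr q + \<epsilon>)"
          using sig_nn[OF \<open>x \<in> E\<close>] by (rule mult_left_mono)
      qed
      also have "\<dots> = energy E \<sigma> q a + S * \<epsilon>"
        unfolding energy_adm[OF aA] S_def by (simp add: ring_distribs sum.distrib sum_distrib_right)
      finally show ?thesis .
    qed
    have h2: "energy E \<sigma> q a \<le> energy E \<sigma> q b" using extremal_le[OF xa bA] .
    have h3: "energy E \<sigma> q b \<le> energy E \<sigma> p b + S * \<epsilon>"
    proof -
      have "energy E \<sigma> q b \<le> (\<Sum>x\<in>E. \<sigma> x * (b x powr p + \<epsilon>))"
        unfolding energy_adm[OF bA]
      proof (rule sum_mono)
        fix x assume "x \<in> E"
        have "b x powr q \<le> b x powr p + \<epsilon>" using close[OF adm_nonneg[OF bA] bM, of x] by linarith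
        thus "\<sigma> x * b x powr q \<le> \<sigma> x * (b x powr p + \<epsilon>)"
          using sig_nn[OF \<open>x \<in> E\<close>] by (rule mult_left_mono)
      qed
      also have "\<dots> = energy E \<sigma> p b + S * \<epsilon>"
        unfolding energy_adm[OF bA] S_def by (simp add: ring_distribs sum.distrib sum_distrib_right)
      finally show ?thesis .
    qed
    define \<mu> where "\<mu> = (\<lambda>x. (a x + b x)/2)"
    have mA: "\<mu> \<in> admissible E \<Gamma>" unfolding \<mu>_def by (rule mid_adm[OF aA bA])
    have h4: "energy E \<sigma> p b \<le> energy E \<sigma> p \<mu>" using extremal_le[OF xb mA] .
    show "\<bar>a e - b e\<bar> < \<eta>"
    proof (rule ccontr)
      assume "\<not> \<bar>a e - b e\<bar> < \<eta>"
      hence far: "\<eta> \<le> \<bar>a e - b e\<bar>" by simp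
      define t where "t = (\<lambda>x. \<sigma> x * (a x powr p + b x powr p - 2 * \<mu> x powr p))"
      have tnn: "\<forall>x\<in>E. 0 \<le> t x"
      proof
        fix x assume "x \<in> E"
        have "\<mu> x powr p \<le> (a x powr p + b x powr p)/2"
          unfolding \<mu>_def by (rule mid_powr[OF adm_nonneg[OF aA] adm_nonneg[OF bA] p])
        thus "0 \<le> t x" unfolding t_def using sig_nn[OF \<open>x \<in> E\<close>] by simp
      qed
      have "g0 \<le> (a e powr p + b e powr p)/2 - \<mu> e powr p"
        unfolding \<mu>_def by (rule gap[OF adm_nonneg[OF aA] aM adm_nonneg[OF bA] bM far])
      hence "2 * g0 \<le> a e powr p + b e powr p - 2 * \<mu> e powr p"
        using add_divide_distrib[of "a e powr p" "b e powr p" 2] by linarith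
      hence "\<sigma> e * (2 * g0) \<le> \<sigma> e * (a e powr p + b e powr p - 2 * \<mu> e powr p)"
        using se by (intro mult_left_mono) auto
      hence "2 * \<sigma> e * g0 \<le> t e" unfolding t_def by (simp add: algebra_simps)
      also have "t e \<le> (\<Sum>x\<in>E. t x)" using fin eE tnn by (intro member_le_sum) auto
      also have "(\<Sum>x\<in>E. t x) = energy E \<sigma> p a + energy E \<sigma> p b - 2 * energy E \<sigma> p \<mu>"
        unfolding energy_adm[OF aA] energy_adm[OF bA] energy_adm[OF mA] t_def
        by (simp add: algebra_simps sum.distrib sum_subtractf sum_distrib_left)
      finally have "2 * \<sigma> e * g0 \<le> energy E \<sigma> p a + energy E \<sigma> p b - 2 * energy E \<sigma> p \<mu>" .
      moreover have "0 < \<sigma> e * g0" using se g0 by simp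
      moreover have "2 * \<sigma> e * g0 = 2 * (\<sigma> e * g0)" "2 * S * \<epsilon> = 2 * (S * \<epsilon>)" by simp_all
      ultimately show False using h1 h2 h3 h4 \<epsilon>S by linarith
    qed
  qed
qed

lemma main_lim:
  assumes p: "1 < p" and N: "norm_on E N"
  shows "((\<lambda>q. N (\<lambda>e. the_extremal E \<sigma> p \<Gamma> e - the_extremal E \<sigma> q \<Gamma> e)) \<longlongrightarrow> 0) (at p)"
proof -
  define b where "b = the_extremal E \<sigma> p \<Gamma>"
  define ex where "ex = (\<lambda>q. the_extremal E \<sigma> q \<Gamma>)"
  have ev1: "eventually (\<lambda>q. 1 < q) (at p)"
    unfolding eventually_at
    by (rule exI[of _ "p - 1"]) (use p in \<open>auto simp: dist_real_def\<close>)
  have van: "\<forall>e. e \<notin> E \<longrightarrow> b e - ex q e = 0" if "1 < q" for q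
  proof (intro allI impI)
    fix e assume "e \<notin> E"
    moreover have "b \<in> admissible E \<Gamma>" "ex q \<in> admissible E \<Gamma>"
      using the_ext[OF that] the_ext[OF p] unfolding b_def ex_def extremal_density_def by auto
    ultimately show "b e - ex q e = 0" using adm_out[of b e] adm_out[of "ex q" e] by simp
  qed
  have lim: "((\<lambda>q. \<Sum>e\<in>E. \<bar>b e - ex q e\<bar> * N (\<lambda>x. if x = e then 1 else 0)) \<longlongrightarrow> 0) (at p)"
  proof (intro tendsto_null_sum tendsto_mult_left_zero tendsto_rabs_zero)
    fix e assume eE: "e \<in> E"
    show "((\<lambda>q. b e - ex q e) \<longlongrightarrow> 0) (at p)"
    proof (rule tendstoI)
      fix \<eta> :: real assume "0 < \<eta>"
      from conv_e[OF p eE this] show "eventually (\<lambda>q. dist (b e - ex q e) 0 < \<eta>) (at p)"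
        unfolding b_def ex_def by (rule eventually_mono) (simp add: dist_real_def abs_minus_commute)
    qed
  qed
  have e1: "eventually (\<lambda>q. (0::real) \<le> N (\<lambda>e. b e - ex q e)) (at p)"
    using ev1 by (rule eventually_mono) (use norm_onD(1)[OF N van van] in blast)
  have e2: "eventually (\<lambda>q. N (\<lambda>e. b e - ex q e) \<le> (\<Sum>e\<in>E. \<bar>b e - ex q e\<bar> * N (\<lambda>x. if x = e then 1 else 0))) (at p)"
    using ev1 by (rule eventually_mono) (use norm_bound[OF N fin van] in blast)
  have "((\<lambda>q. N (\<lambda>e. b e - ex q e)) \<longlongrightarrow> 0) (at p)"
    by (rule tendsto_sandwich[OF e1 e2 tendsto_const lim])
  thus ?thesis unfolding b_def ex_def .
qed

end

lemma di_case:
  assumes h: "simple_digraph V E \<and> (\<forall>e\<in>E. \<sigma> e > 0) \<and>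
      \<Gamma> \<noteq> {} \<and> (\<forall>\<gamma>\<in>\<Gamma>. is_walk dtrav E \<gamma>) \<and> 1 < p" and N: "norm_on E N"
  shows "((\<lambda>q. N (\<lambda>e. the_extremal E \<sigma> p \<Gamma> e - the_extremal E \<sigma> q \<Gamma> e)) \<longlongrightarrow> 0) (at p)"
proof -
  have fV: "finite V" and sub: "E \<subseteq> V \<times> V" using h unfolding simple_digraph_def by simp_all
  have "finite E" using finite_subset[OF sub finite_SigmaI[OF fV fV]] .
  moreover have "\<forall>\<gamma>\<in>\<Gamma>. \<gamma> \<noteq> [] \<and> set \<gamma> \<subseteq> E" using h unfolding is_walk_def by blast
  ultimately interpret mg E \<sigma> \<Gamma> using h by unfold_locales auto
  show ?thesis by (rule main_lim) (use h N in simp_all)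
qed

lemma un_case:
  assumes h: "simple_ugraph V E \<and> (\<forall>e\<in>E. \<sigma> e > 0) \<and>
      \<Gamma> \<noteq> {} \<and> (\<forall>\<gamma>\<in>\<Gamma>. is_walk utrav E \<gamma>) \<and> 1 < p" and N: "norm_on E N"
  shows "((\<lambda>q. N (\<lambda>e. the_extremal E \<sigma> p \<Gamma> e - the_extremal E \<sigma> q \<Gamma> e)) \<longlongrightarrow> 0) (at p)"
proof -
  have "E \<subseteq> Pow V"
  proof
    fix e assume "e \<in> E"
    then obtain u v where "u \<in> V" "v \<in> V" "e = {u, v}" using h unfolding simple_ugraph_def by blast
    thus "e \<in> Pow V" by simp
  qed
  moreover have "finite (Pow V)" using h unfolding simple_ugraph_def by simp
  ultimately have "finite E" by (rule finite_subset)
  moreover have "\<forall>\<gamma>\<in>\<Gamma>. \<gamma> \<noteq> [] \<and> set \<gamma> \<subseteq> E" using h unfolding is_walk_def by blast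
  ultimately interpret mg E \<sigma> \<Gamma> using h by unfold_locales auto
  show ?thesis by (rule main_lim) (use h N in simp_all)
qed

theorem mainTheorem11:
  shows
  "(\<forall>(V :: 'v set) (E :: ('v \<times> 'v) set) \<sigma> \<Gamma> (p :: real).
      simple_digraph V E \<and> (\<forall>e\<in>E. \<sigma> e > 0) \<and>
      \<Gamma> \<noteq> {} \<and> (\<forall>\<gamma>\<in>\<Gamma>. is_walk dtrav E \<gamma>) \<and> 1 < p
      \<longrightarrow> (\<forall>N. norm_on E N \<longrightarrow>
          ((\<lambda>q. N (\<lambda>e. the_extremal E \<sigma> p \<Gamma> e - the_extremal E \<sigma> q \<Gamma> e)) \<longlongrightarrow> 0) (at p)))
   \<and>
   (\<forall>(V :: 'v set) (E :: 'v set set) \<sigma> \<Gamma> (p :: real).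
      simple_ugraph V E \<and> (\<forall>e\<in>E. \<sigma> e > 0) \<and>
      \<Gamma> \<noteq> {} \<and> (\<forall>\<gamma>\<in>\<Gamma>. is_walk utrav E \<gamma>) \<and> 1 < p
      \<longrightarrow> (\<forall>N. norm_on E N \<longrightarrow>
          ((\<lambda>q. N (\<lambda>e. the_extremal E \<sigma> p \<Gamma> e - the_extremal E \<sigma> q \<Gamma> e)) \<longlongrightarrow> 0) (at p)))"
  apply (intro conjI allI impI)
  subgoal by (rule di_case)
  subgoal by (rule un_case)
  done

end
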